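(* Let $\Gamma_H$ be the H-junction tree with edges $e_1,\dots,e_5$ of propagation times $t_1,\dots,t_5$, linearly independent over $\mathbb{Q}$, where the two interior vertices are $A$ (incident to $e_1,e_2,e_3$) and $B$ (incident to $e_3,e_4,e_5$). Then there is a constant $C$ independent of $T$ such that for all $T\ge 0$ $$N(\Gamma_H, A, A, T) = \#[2n_1t_1 + 2n_3t_3 + 2n_4t_4 + 2n_5t_5 \le T] + \#[2n_2t_2 + 2n_3t_3 + 2n_4t_4 + 2n_5t_5 \le T] - \#[2n_1t_1 + 2n_4t_4 + 2n_5t_5 \le T] - \#[2n_2t_2 + 2n_4t_4 + 2n_5t_5 \le T] + \#[2n_1t_1 + 2n_2t_2 \le T] + \#[2n_1t_1 \le T] + \#[2n_2t_2 \le T] + C.$$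
   Context: $\Gamma_H$ has six vertices: $A$, $B$, and the four distinct valence-one endpoints of $e_1,e_2,e_4,e_5$ other than $A$, $B$; $e_3$ joins $A$ and $B$. Dynamics: each edge $e_i$ is traversed in time $t_i$; at time $0$ the process starts at $A$ (a point departs from $A$ along each incident edge); at a valence-one vertex a point is reflected; if $k$ points arrive simultaneously at an interior vertex of valence $v$, then $v$ points leave it, one along each incident edge, and $v-k$ new points are said to be born there. $N(\Gamma,A,X,T)$ is the total number of new points born at vertex $X$ up to the moment $T$ when the process starts at $A$. $\#[\text{inequality}]$ denotes the number of tuples of nonnegative integers $n_i$ satisfying the inequality. *)

theory Defs
  imports Complex_Main
begin

definition incident :: "('e \<Rightarrow> 'v \<times> 'v) \<Rightarrow> 'v \<Rightarrow> 'e \<Rightarrow> bool" where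
  "incident ends X e \<longleftrightarrow> X = fst (ends e) \<or> X = snd (ends e)"

definition other_end :: "('e \<Rightarrow> 'v \<times> 'v) \<Rightarrow> 'v \<Rightarrow> 'e \<Rightarrow> 'v" where
  "other_end ends X e = (if X = fst (ends e) then snd (ends e) else fst (ends e))"

definition valence :: "('e \<Rightarrow> 'v \<times> 'v) \<Rightarrow> 'v \<Rightarrow> nat" where
  "valence ends X = card {e. incident ends X e}"

text \<open>departs ends tm X0 X e s: in the process started at X0 at time 0, a point
  leaves vertex X along edge e at time s.  Points arriving (simultaneously) at a
  vertex cause one point to leave along each incident edge; at a valence-one
  vertex this is the reflection.\<close>

inductive departs :: "('e \<Rightarrow> 'v \<times> 'v) \<Rightarrow> ('e \<Rightarrow> real) \<Rightarrow> 'v \<Rightarrow> 'v \<Rightarrow> 'e \<Rightarrow> real \<Rightarrow> bool"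
  for ends tm X0 where
  start: "incident ends X0 e \<Longrightarrow> departs ends tm X0 X0 e 0"
| step: "departs ends tm X0 X e s \<Longrightarrow> incident ends (other_end ends X e) e' \<Longrightarrow>
           departs ends tm X0 (other_end ends X e) e' (s + tm e)"

definition arrives :: "('e \<Rightarrow> 'v \<times> 'v) \<Rightarrow> ('e \<Rightarrow> real) \<Rightarrow> 'v \<Rightarrow> 'v \<Rightarrow> 'e \<Rightarrow> real \<Rightarrow> bool" where
  "arrives ends tm X0 Y e s \<longleftrightarrow>
     (\<exists>X. departs ends tm X0 X e (s - tm e) \<and> other_end ends X e = Y)"

definition born_at :: "('e \<Rightarrow> 'v \<times> 'v) \<Rightarrow> ('e \<Rightarrow> real) \<Rightarrow> 'v \<Rightarrow> 'v \<Rightarrow> real \<Rightarrow> nat" where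
  "born_at ends tm X0 X s =
     valence ends X - card {e. incident ends X e \<and> arrives ends tm X0 X e s}"

text \<open>N(Gamma, X0, X, T): total number of new points born at X up to time T.\<close>
definition Nborn :: "('e \<Rightarrow> 'v \<times> 'v) \<Rightarrow> ('e \<Rightarrow> real) \<Rightarrow> 'v \<Rightarrow> 'v \<Rightarrow> real \<Rightarrow> nat" where
  "Nborn ends tm X0 X T =
     (\<Sum>s \<in> {s. s \<le> T \<and> (\<exists>e. departs ends tm X0 X e s)}. born_at ends tm X0 X s)"

datatype hvert = A | B | P1 | P2 | P4 | P5
datatype hedge = E1 | E2 | E3 | E4 | E5

fun H_ends :: "hedge \<Rightarrow> hvert \<times> hvert" where
  "H_ends E1 = (A, P1)"
| "H_ends E2 = (A, P2)"
| "H_ends E3 = (A, B)"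
| "H_ends E4 = (B, P4)"
| "H_ends E5 = (B, P5)"

fun H_time :: "real \<Rightarrow> real \<Rightarrow> real \<Rightarrow> real \<Rightarrow> real \<Rightarrow> hedge \<Rightarrow> real" where
  "H_time t1 t2 t3 t4 t5 E1 = t1"
| "H_time t1 t2 t3 t4 t5 E2 = t2"
| "H_time t1 t2 t3 t4 t5 E3 = t3"
| "H_time t1 t2 t3 t4 t5 E4 = t4"
| "H_time t1 t2 t3 t4 t5 E5 = t5"

end

theory Submission
  imports Defs
begin

lemma incident_H: "incident H_ends X e \<longleftrightarrow>
  (X = A \<and> (e = E1 \<or> e = E2 \<or> e = E3)) \<or> (X = B \<and> (e = E3 \<or> e = E4 \<or> e = E5)) \<or>
  (X = P1 \<and> e = E1) \<or> (X = P2 \<and> e = E2) \<or> (X = P4 \<and> e = E4) \<or> (X = P5 \<and> e = E5)"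
  by (cases e; cases X; simp add: incident_def)

lemma oe_H [simp]:
  "other_end H_ends A E1 = P1" "other_end H_ends P1 E1 = A"
  "other_end H_ends A E2 = P2" "other_end H_ends P2 E2 = A"
  "other_end H_ends A E3 = B" "other_end H_ends B E3 = A"
  "other_end H_ends B E4 = P4" "other_end H_ends P4 E4 = B"
  "other_end H_ends B E5 = P5" "other_end H_ends P5 E5 = B"
  by (simp_all add: other_end_def)

locale H =
  fixes t1 t2 t3 t4 t5 :: real
  assumes pos: "t1 > 0" "t2 > 0" "t3 > 0" "t4 > 0" "t5 > 0"
    and li: "\<And>q1 q2 q3 q4 q5 :: rat.
        of_rat q1 * t1 + of_rat q2 * t2 + of_rat q3 * t3 + of_rat q4 * t4 + of_rat q5 * t5 = 0 \<Longrightarrow>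
        q1 = 0 \<and> q2 = 0 \<and> q3 = 0 \<and> q4 = 0 \<and> q5 = 0"
begin

abbreviation "tm \<equiv> H_time t1 t2 t3 t4 t5"
abbreviation "dep X e s \<equiv> departs H_ends tm A X e s"

definition val :: "nat \<Rightarrow> nat \<Rightarrow> nat \<Rightarrow> nat \<Rightarrow> nat \<Rightarrow> real" where
  "val a b c d e = 2*real a*t1 + 2*real b*t2 + 2*real c*t3 + 2*real d*t4 + 2*real e*t5"

definition isA where "isA s \<longleftrightarrow> (\<exists>a b c d e. s = val a b c d e \<and> (c = 0 \<longrightarrow> d = 0 \<and> e = 0))"
definition isB where "isB s \<longleftrightarrow> (\<exists>a b c d e. s = t3 + val a b c d e)"

fun inv :: "hvert \<Rightarrow> real \<Rightarrow> bool" where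
  "inv A s = isA s" | "inv P1 s = isA (s - t1)" | "inv P2 s = isA (s - t2)"
| "inv B s = isB s" | "inv P4 s = isB (s - t4)" | "inv P5 s = isB (s - t5)"

lemma isA1: "isA (s - t1) \<Longrightarrow> isA (s + t1)"
  unfolding isA_def
proof (elim exE conjE)
  fix a b c d e assume "s - t1 = val a b c d e" "c = 0 \<longrightarrow> d = 0 \<and> e = 0"
  then show "\<exists>a b c d e. s + t1 = val a b c d e \<and> (c = 0 \<longrightarrow> d = 0 \<and> e = 0)"
    by (intro exI[of _ "Suc a"] exI[of _ b] exI[of _ c] exI[of _ d] exI[of _ e]) (auto simp: val_def algebra_simps)
qed

lemma isA2: "isA (s - t2) \<Longrightarrow> isA (s + t2)"
  unfolding isA_def
proof (elim exE conjE)
  fix a b c d e assume "s - t2 = val a b c d e" "c = 0 \<longrightarrow> d = 0 \<and> e = 0"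
  then show "\<exists>a b c d e. s + t2 = val a b c d e \<and> (c = 0 \<longrightarrow> d = 0 \<and> e = 0)"
    by (intro exI[of _ a] exI[of _ "Suc b"] exI[of _ c] exI[of _ d] exI[of _ e]) (auto simp: val_def algebra_simps)
qed

lemma isB4: "isB (s - t4) \<Longrightarrow> isB (s + t4)"
  unfolding isB_def
proof (elim exE conjE)
  fix a b c d e assume "s - t4 = t3 + val a b c d e"
  then show "\<exists>a b c d e. s + t4 = t3 + val a b c d e"
    by (intro exI[of _ a] exI[of _ b] exI[of _ c] exI[of _ "Suc d"] exI[of _ e]) (auto simp: val_def algebra_simps)
qed

lemma isB5: "isB (s - t5) \<Longrightarrow> isB (s + t5)"
  unfolding isB_def
proof (elim exE conjE)
  fix a b c d e assume "s - t5 = t3 + val a b c d e"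
  then show "\<exists>a b c d e. s + t5 = t3 + val a b c d e"
    by (intro exI[of _ a] exI[of _ b] exI[of _ c] exI[of _ d] exI[of _ "Suc e"]) (auto simp: val_def algebra_simps)
qed

lemma isAB: "isA s \<Longrightarrow> isB (s + t3)"
  unfolding isA_def isB_def by (metis add.commute)

lemma isBA: "isB s \<Longrightarrow> isA (s + t3)"
  unfolding isB_def isA_def
proof (elim exE conjE)
  fix a b c d e assume "s = t3 + val a b c d e"
  then show "\<exists>a b c d e. s + t3 = val a b c d e \<and> (c = 0 \<longrightarrow> d = 0 \<and> e = 0)"
    by (intro exI[of _ a] exI[of _ b] exI[of _ "Suc c"] exI[of _ d] exI[of _ e]) (auto simp: val_def algebra_simps)
qed

lemma dep_inc: "dep X e s \<Longrightarrow> incident H_ends X e"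
  by (induction rule: departs.induct) auto

lemma dep_inv: "dep X e s \<Longrightarrow> inv X s"
proof (induction rule: departs.induct)
  case (start e)
  then show ?case by (auto simp: isA_def val_def intro!: exI[of _ 0])
next
  case (step X e s e')
  from dep_inc[OF step.hyps(1)] have "incident H_ends X e" .
  then show ?case using step.IH
    by (cases X; cases e; auto simp: incident_H intro: isA1 isA2 isB4 isB5 isAB isBA)
qed

lemma any_edge: "dep X e s \<Longrightarrow> incident H_ends X e' \<Longrightarrow> dep X e' s"
  by (cases rule: departs.cases) (auto intro: departs.intros)

lemma step': "dep X e s \<Longrightarrow> other_end H_ends X e = Y \<Longrightarrow> incident H_ends Y e' \<Longrightarrow>
   s' = s + tm e \<Longrightarrow> dep Y e' s'"
  using departs.step[of H_ends tm A X e s e'] by simp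

lemma rt: assumes "dep X e s" "incident H_ends X e" "incident H_ends X f" "other_end H_ends X f = Y"
  "other_end H_ends Y f = X" "incident H_ends Y f"
  shows "dep X e (s + 2 * tm f)"
proof -
  have "dep X f s" using any_edge assms by blast
  then have "dep Y f (s + tm f)" using step' assms by blast
  then show ?thesis using step'[of Y f "s + tm f" X e "s + 2*tm f"] assms by simp
qed

lemma iter: assumes "dep X e s" "incident H_ends X f" "other_end H_ends X f = Y"
  "other_end H_ends Y f = X" "incident H_ends Y f"
  shows "dep X e (s + 2 * real n * tm f)"
proof (induction n)
  case 0 then show ?case using assms by simp
next
  case (Suc n)
  have "dep X e (s + 2 * real n * tm f + 2 * tm f)"
    using rt[OF Suc dep_inc[OF assms(1)] assms(2-)] .
  then show ?case by (simp add: algebra_simps)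
qed

lemma L1: "incident H_ends A e \<Longrightarrow> dep A e (val a b c 0 0)"
proof -
  assume i: "incident H_ends A e"
  have "dep A e 0" using i by (rule departs.start)
  then have "dep A e (0 + 2 * real a * tm E1)" by (rule iter) (auto simp: incident_H)
  then have "dep A e (0 + 2 * real a * tm E1 + 2 * real b * tm E2)" by (rule iter) (auto simp: incident_H)
  then have "dep A e (0 + 2 * real a * tm E1 + 2 * real b * tm E2 + 2 * real c * tm E3)" by (rule iter) (auto simp: incident_H)
  then show ?thesis by (simp add: val_def)
qed

lemma L2: "incident H_ends B e \<Longrightarrow> dep B e (t3 + val a b c d f)"
proof -
  assume i: "incident H_ends B e"
  have "dep A E3 (val a b c 0 0)" by (rule L1) (simp add: incident_H)
  then have "dep B e (val a b c 0 0 + tm E3)" using step'[OF _ _ i, of A E3 "val a b c 0 0" "val a b c 0 0 + tm E3"] by simp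
  then have "dep B e (val a b c 0 0 + tm E3 + 2 * real d * tm E4)" by (rule iter) (auto simp: incident_H)
  then have "dep B e (val a b c 0 0 + tm E3 + 2 * real d * tm E4 + 2 * real f * tm E5)" by (rule iter) (auto simp: incident_H)
  then show ?thesis by (simp add: val_def algebra_simps)
qed

lemma L3: assumes "c = 0 \<longrightarrow> d = 0 \<and> f = 0" "incident H_ends A e"
  shows "dep A e (val a b c d f)"
proof (cases c)
  case 0 then show ?thesis using assms L1 by auto
next
  case (Suc c')
  have "dep B E3 (t3 + val a b c' d f)" by (rule L2) (simp add: incident_H)
  then have "dep A e (t3 + val a b c' d f + tm E3)" using step'[OF _ _ assms(2), of B E3 "t3 + val a b c' d f" "t3 + val a b c' d f + tm E3"] by simp
  then show ?thesis using Suc by (simp add: val_def algebra_simps)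
qed

lemma uniq: assumes "val a b c d e = val a' b' c' d' e'"
  shows "a = a' \<and> b = b' \<and> c = c' \<and> d = d' \<and> e = e'"
proof -
  let ?q = "\<lambda>x y. (of_nat x - of_nat y :: rat)"
  have "of_rat (?q a a') * t1 + of_rat (?q b b') * t2 + of_rat (?q c c') * t3 + of_rat (?q d d') * t4
     + of_rat (?q e e') * t5 = 0"
    using assms by (simp add: of_rat_diff val_def algebra_simps)
  from li[OF this] show ?thesis by simp
qed


lemma arrE1: "arrives H_ends tm A A E1 s \<longleftrightarrow> dep P1 E1 (s - t1)"
  unfolding arrives_def
proof (intro iffI; (elim exE conjE)?)
  fix X assume h: "dep X E1 (s - tm E1)" "other_end H_ends X E1 = A"
  then have "incident H_ends X E1" using dep_inc by blast
  with h show "dep P1 E1 (s - t1)" by (cases X) (auto simp: incident_H)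
next
  assume "dep P1 E1 (s - t1)"
  then show "\<exists>X. dep X E1 (s - tm E1) \<and> other_end H_ends X E1 = A" by (intro exI[of _ P1]) simp
qed

lemma arrE2: "arrives H_ends tm A A E2 s \<longleftrightarrow> dep P2 E2 (s - t2)"
  unfolding arrives_def
proof (intro iffI; (elim exE conjE)?)
  fix X assume h: "dep X E2 (s - tm E2)" "other_end H_ends X E2 = A"
  then have "incident H_ends X E2" using dep_inc by blast
  with h show "dep P2 E2 (s - t2)" by (cases X) (auto simp: incident_H)
next
  assume "dep P2 E2 (s - t2)"
  then show "\<exists>X. dep X E2 (s - tm E2) \<and> other_end H_ends X E2 = A" by (intro exI[of _ P2]) simp
qed

lemma arrE3: "arrives H_ends tm A A E3 s \<longleftrightarrow> dep B E3 (s - t3)"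
  unfolding arrives_def
proof (intro iffI; (elim exE conjE)?)
  fix X assume h: "dep X E3 (s - tm E3)" "other_end H_ends X E3 = A"
  then have "incident H_ends X E3" using dep_inc by blast
  with h show "dep B E3 (s - t3)" by (cases X) (auto simp: incident_H)
next
  assume "dep B E3 (s - t3)"
  then show "\<exists>X. dep X E3 (s - tm E3) \<and> other_end H_ends X E3 = A" by (intro exI[of _ B]) simp
qed

lemma arr1: assumes ok: "c = 0 \<longrightarrow> d = 0 \<and> e = 0"
  shows "arrives H_ends tm A A E1 (val a b c d e) \<longleftrightarrow> a \<noteq> 0"
proof
  assume "arrives H_ends tm A A E1 (val a b c d e)"
  then have "inv P1 (val a b c d e - t1)" using arrE1 dep_inv by blast
  then obtain a' b' c' d' e' where "val a b c d e - t1 - t1 = val a' b' c' d' e'"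
    by (auto simp: isA_def)
  then have "val a b c d e = val (Suc a') b' c' d' e'" by (simp add: val_def algebra_simps)
  then show "a \<noteq> 0" using uniq by blast
next
  assume "a \<noteq> 0"
  then obtain a' where a: "a = Suc a'" by (cases a) auto
  have "dep A E1 (val a' b c d e)" using ok by (intro L3) (auto simp: incident_H)
  then have "dep P1 E1 (val a b c d e - t1)"
    by (rule step') (auto simp: incident_H a val_def algebra_simps)
  then show "arrives H_ends tm A A E1 (val a b c d e)" using arrE1 by blast
qed

lemma arr2: assumes ok: "c = 0 \<longrightarrow> d = 0 \<and> e = 0"
  shows "arrives H_ends tm A A E2 (val a b c d e) \<longleftrightarrow> b \<noteq> 0"
proof
  assume "arrives H_ends tm A A E2 (val a b c d e)"
  then have "inv P2 (val a b c d e - t2)" using arrE2 dep_inv by blast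
  then obtain a' b' c' d' e' where "val a b c d e - t2 - t2 = val a' b' c' d' e'"
    by (auto simp: isA_def)
  then have "val a b c d e = val a' (Suc b') c' d' e'" by (simp add: val_def algebra_simps)
  then show "b \<noteq> 0" using uniq by blast
next
  assume "b \<noteq> 0"
  then obtain b' where b: "b = Suc b'" by (cases b) auto
  have "dep A E2 (val a b' c d e)" using ok by (intro L3) (auto simp: incident_H)
  then have "dep P2 E2 (val a b c d e - t2)"
    by (rule step') (auto simp: incident_H b val_def algebra_simps)
  then show "arrives H_ends tm A A E2 (val a b c d e)" using arrE2 by blast
qed

lemma arr3: "arrives H_ends tm A A E3 (val a b c d e) \<longleftrightarrow> c \<noteq> 0"
proof
  assume "arrives H_ends tm A A E3 (val a b c d e)"
  then have "inv B (val a b c d e - t3)" using arrE3 dep_inv by blast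
  then obtain a' b' c' d' e' where "val a b c d e - t3 = t3 + val a' b' c' d' e'"
    by (auto simp: isB_def)
  then have "val a b c d e = val a' b' (Suc c') d' e'" by (simp add: val_def algebra_simps)
  then show "c \<noteq> 0" using uniq by blast
next
  assume "c \<noteq> 0"
  then obtain c' where c: "c = Suc c'" by (cases c) auto
  have "dep B E3 (t3 + val a b c' d e)" by (intro L2) (auto simp: incident_H)
  moreover have "t3 + val a b c' d e = val a b c d e - t3" by (simp add: c val_def algebra_simps)
  ultimately show "arrives H_ends tm A A E3 (val a b c d e)" using arrE3 by simp
qed

lemma born: assumes ok: "c = 0 \<longrightarrow> d = 0 \<and> e = 0"
  shows "born_at H_ends tm A A (val a b c d e) =
     (if a = 0 then 1 else 0) + (if b = 0 then 1 else 0) + (if c = 0 then 1 else 0)"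
proof -
  have v: "valence H_ends A = 3"
  proof -
    have "{e. incident H_ends A e} = {E1, E2, E3}" by (auto simp: incident_H)
    then show ?thesis by (simp add: valence_def)
  qed
  have S: "{f. incident H_ends A f \<and> arrives H_ends tm A A f (val a b c d e)} =
     {f. (f = E1 \<and> a \<noteq> 0) \<or> (f = E2 \<and> b \<noteq> 0) \<or> (f = E3 \<and> c \<noteq> 0)}"
    using arr1[OF ok] arr2[OF ok] arr3 by (auto simp: incident_H)
  show ?thesis unfolding born_at_def v S
    by (cases "a = 0"; cases "b = 0"; cases "c = 0"; simp add: card_insert_if insert_commute Collect_disj_eq)
qed


lemma bnd: assumes "c > 0" "2*real a*c \<le> T" shows "a \<le> nat \<lceil>T/(2*c)\<rceil>"
proof -
  have "real a \<le> T/(2*c)" using assms by (simp add: field_simps)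
  also have "\<dots> \<le> of_int \<lceil>T/(2*c)\<rceil>" by (rule le_of_int_ceiling)
  finally show ?thesis by linarith
qed

definition fv :: "nat \<times> nat \<times> nat \<times> nat \<times> nat \<Rightarrow> real" where
  "fv = (\<lambda>(a,b,c,d,e). val a b c d e)"

lemma fv_inj: "inj_on fv X"
  by (auto simp: inj_on_def fv_def dest: uniq)

lemma finF: "finite {(a,b,c,d,e). val a b c d e \<le> T}"
proof (rule finite_subset)
  show "{(a,b,c,d,e). val a b c d e \<le> T} \<subseteq>
    {..nat \<lceil>T/(2*t1)\<rceil>} \<times> {..nat \<lceil>T/(2*t2)\<rceil>} \<times> {..nat \<lceil>T/(2*t3)\<rceil>}
     \<times> {..nat \<lceil>T/(2*t4)\<rceil>} \<times> {..nat \<lceil>T/(2*t5)\<rceil>}"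
  proof (clarsimp)
    fix a b c d e assume h: "val a b c d e \<le> T"
    have nn: "0 \<le> 2*real x*t" if "t > 0" for x t using that by simp
    have "2*real a*t1 \<le> T" "2*real b*t2 \<le> T" "2*real c*t3 \<le> T" "2*real d*t4 \<le> T" "2*real e*t5 \<le> T"
      using h nn[OF pos(1), of a] nn[OF pos(2), of b] nn[OF pos(3), of c] nn[OF pos(4), of d] nn[OF pos(5), of e]
      unfolding val_def by linarith+
    then show "a \<le> nat \<lceil>T/(2*t1)\<rceil> \<and> b \<le> nat \<lceil>T/(2*t2)\<rceil> \<and> c \<le> nat \<lceil>T/(2*t3)\<rceil> \<and>
      d \<le> nat \<lceil>T/(2*t4)\<rceil> \<and> e \<le> nat \<lceil>T/(2*t5)\<rceil>"
      using bnd pos by blast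
  qed
qed simp

lemma depset: "{s. s \<le> T \<and> (\<exists>e. dep A e s)} =
   fv ` {(a,b,c,d,e). val a b c d e \<le> T \<and> (c = 0 \<longrightarrow> d = 0 \<and> e = 0)}"
proof (intro set_eqI iffI)
  fix s assume "s \<in> {s. s \<le> T \<and> (\<exists>e. dep A e s)}"
  then obtain f where h: "s \<le> T" "dep A f s" by auto
  then have "inv A s" by (intro dep_inv)
  then obtain a b c d e where "s = val a b c d e" "c = 0 \<longrightarrow> d = 0 \<and> e = 0" by (auto simp: isA_def)
  with h show "s \<in> fv ` {(a,b,c,d,e). val a b c d e \<le> T \<and> (c = 0 \<longrightarrow> d = 0 \<and> e = 0)}"
    by (intro image_eqI[where x="(a,b,c,d,e)"]) (auto simp: fv_def)
next
  fix s assume "s \<in> fv ` {(a,b,c,d,e). val a b c d e \<le> T \<and> (c = 0 \<longrightarrow> d = 0 \<and> e = 0)}"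
  then obtain a b c d e where "s = val a b c d e" "val a b c d e \<le> T" "c = 0 \<longrightarrow> d = 0 \<and> e = 0"
    by (auto simp: fv_def)
  then show "s \<in> {s. s \<le> T \<and> (\<exists>e. dep A e s)}"
    using L3[of c d e E1 a b] by (auto simp: incident_H)
qed


lemma ind_card: "finite V \<Longrightarrow> X \<subseteq> V \<Longrightarrow> (\<Sum>n\<in>V. if n \<in> X then 1 else 0::nat) = card X"
  by (simp add: sum.If_cases Int_absorb1)

lemma Nsplit:
  fixes T :: real
  defines "V \<equiv> {(a,b,c,d,e). val a b c d e \<le> T \<and> (c = 0 \<longrightarrow> d = 0 \<and> e = 0)}"
  shows "Nborn H_ends tm A A T =
     card {(a,b,c,d,e). val a b c d e \<le> T \<and> (c = 0 \<longrightarrow> d = 0 \<and> e = 0) \<and> a = 0}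
   + card {(a,b,c,d,e). val a b c d e \<le> T \<and> (c = 0 \<longrightarrow> d = 0 \<and> e = 0) \<and> b = 0}
   + card {(a,b,c,d,e). val a b c d e \<le> T \<and> (c = 0 \<longrightarrow> d = 0 \<and> e = 0) \<and> c = 0}"
    (is "_ = card ?Va + card ?Vb + card ?Vc")
proof -
  have fin: "finite V" unfolding V_def by (rule finite_subset[OF _ finF]) auto
  have "Nborn H_ends tm A A T = (\<Sum>s\<in>fv ` V. born_at H_ends tm A A s)"
    unfolding Nborn_def depset V_def ..
  also have "\<dots> = (\<Sum>n\<in>V. born_at H_ends tm A A (fv n))"
    by (simp add: sum.reindex fv_inj)
  also have "\<dots> = (\<Sum>n\<in>V. (if n \<in> ?Va then 1 else 0) + (if n \<in> ?Vb then 1 else 0) + (if n \<in> ?Vc then 1 else 0))"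
  proof (rule sum.cong[OF refl])
    fix n assume "n \<in> V"
    then obtain a b c d e where n: "n = (a,b,c,d,e)" "val a b c d e \<le> T" "c = 0 \<longrightarrow> d = 0 \<and> e = 0"
      unfolding V_def by auto
    then show "born_at H_ends tm A A (fv n) = (if n \<in> ?Va then 1 else 0) + (if n \<in> ?Vb then 1 else 0) + (if n \<in> ?Vc then 1 else 0)"
      by (simp add: fv_def born)
  qed
  also have "\<dots> = card ?Va + card ?Vb + card ?Vc"
  proof -
    have "?Va \<subseteq> V" "?Vb \<subseteq> V" "?Vc \<subseteq> V" unfolding V_def by auto
    then show ?thesis unfolding sum.distrib using ind_card[OF fin] by presburger
  qed
  finally show ?thesis .
qed


lemma im1: "{(a,b,c,d,e). val a b c d e \<le> T \<and> a = 0} = (\<lambda>(b,c,d,e). (0,b,c,d,e)) `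
   {(n2, n3, n4, n5). 2 * real n2 * t2 + 2 * real n3 * t3 + 2 * real n4 * t4 + 2 * real n5 * t5 \<le> T}"
  by (auto simp: val_def image_iff)

lemma im2: "{(a,b,c,d,e). val a b c d e \<le> T \<and> a = 0 \<and> c = 0} = (\<lambda>(b,d,e). (0,b,0,d,e)) `
   {(n2, n4, n5). 2 * real n2 * t2 + 2 * real n4 * t4 + 2 * real n5 * t5 \<le> T}"
  by (auto simp: val_def image_iff)

lemma im3: "{(a,b,c,d,e). val a b c d e \<le> T \<and> a = 0 \<and> c = 0 \<and> d = 0 \<and> e = 0} = (\<lambda>b. (0,b,0,0,0)) `
   {n2. 2 * real n2 * t2 \<le> T}"
  by (auto simp: val_def image_iff)


lemma imb1: "{(a,b,c,d,e). val a b c d e \<le> T \<and> b = 0} = (\<lambda>(a,c,d,e). (a,0,c,d,e)) `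
   {(n1, n3, n4, n5). 2 * real n1 * t1 + 2 * real n3 * t3 + 2 * real n4 * t4 + 2 * real n5 * t5 \<le> T}"
  by (auto simp: val_def image_iff)

lemma imb2: "{(a,b,c,d,e). val a b c d e \<le> T \<and> b = 0 \<and> c = 0} = (\<lambda>(a,d,e). (a,0,0,d,e)) `
   {(n1, n4, n5). 2 * real n1 * t1 + 2 * real n4 * t4 + 2 * real n5 * t5 \<le> T}"
  by (auto simp: val_def image_iff)

lemma imb3: "{(a,b,c,d,e). val a b c d e \<le> T \<and> b = 0 \<and> c = 0 \<and> d = 0 \<and> e = 0} = (\<lambda>a. (a,0,0,0,0)) `
   {n1. 2 * real n1 * t1 \<le> T}"
  by (auto simp: val_def image_iff)

lemma imc: "{(a,b,c,d,e). val a b c d e \<le> T \<and> (c = 0 \<longrightarrow> d = 0 \<and> e = 0) \<and> c = 0} = (\<lambda>(a,b). (a,b,0,0,0)) `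
   {(n1, n2). 2 * real n1 * t1 + 2 * real n2 * t2 \<le> T}"
  by (auto simp: val_def image_iff)

lemma cdiff: "finite X \<Longrightarrow> Y \<subseteq> X \<Longrightarrow> int (card (X - Y)) = int (card X) - int (card Y)"
  by (simp add: card_Diff_subset card_mono finite_subset of_nat_diff)

lemma final: "int (Nborn H_ends tm A A T) =
        int (card {(n1, n3, n4, n5).
               2 * real n1 * t1 + 2 * real n3 * t3 + 2 * real n4 * t4 + 2 * real n5 * t5 \<le> T})
      + int (card {(n2, n3, n4, n5).
               2 * real n2 * t2 + 2 * real n3 * t3 + 2 * real n4 * t4 + 2 * real n5 * t5 \<le> T})
      - int (card {(n1, n4, n5).
               2 * real n1 * t1 + 2 * real n4 * t4 + 2 * real n5 * t5 \<le> T})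
      - int (card {(n2, n4, n5).
               2 * real n2 * t2 + 2 * real n4 * t4 + 2 * real n5 * t5 \<le> T})
      + int (card {(n1, n2). 2 * real n1 * t1 + 2 * real n2 * t2 \<le> T})
      + int (card {n1. 2 * real n1 * t1 \<le> T})
      + int (card {n2. 2 * real n2 * t2 \<le> T})"
proof -
  let ?F = "{(a,b,c,d,e). val a b c d e \<le> T}"
  have fin: "finite X" if "X \<subseteq> ?F" for X using finite_subset[OF that finF] .
  let ?Fa = "{(a,b,c,d,e). val a b c d e \<le> T \<and> a = 0}"
  let ?Fac = "{(a,b,c,d,e). val a b c d e \<le> T \<and> a = 0 \<and> c = 0}"
  let ?Facde = "{(a,b,c,d,e). val a b c d e \<le> T \<and> a = 0 \<and> c = 0 \<and> d = 0 \<and> e = 0}"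
  let ?Fb = "{(a,b,c,d,e). val a b c d e \<le> T \<and> b = 0}"
  let ?Fbc = "{(a,b,c,d,e). val a b c d e \<le> T \<and> b = 0 \<and> c = 0}"
  let ?Fbcde = "{(a,b,c,d,e). val a b c d e \<le> T \<and> b = 0 \<and> c = 0 \<and> d = 0 \<and> e = 0}"
  have ea: "{(a,b,c,d,e). val a b c d e \<le> T \<and> (c = 0 \<longrightarrow> d = 0 \<and> e = 0) \<and> a = 0} = ?Fa - (?Fac - ?Facde)"
    by auto
  have eb: "{(a,b,c,d,e). val a b c d e \<le> T \<and> (c = 0 \<longrightarrow> d = 0 \<and> e = 0) \<and> b = 0} = ?Fb - (?Fbc - ?Fbcde)"
    by auto
  have ca: "int (card (?Fa - (?Fac - ?Facde))) = int (card ?Fa) - (int (card ?Fac) - int (card ?Facde))"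
    by (subst cdiff, rule fin, auto, subst cdiff, rule fin, auto)
  have cb: "int (card (?Fb - (?Fbc - ?Fbcde))) = int (card ?Fb) - (int (card ?Fbc) - int (card ?Fbcde))"
    by (subst cdiff, rule fin, auto, subst cdiff, rule fin, auto)
  have i1: "card ?Fa = card {(n2, n3, n4, n5). 2 * real n2 * t2 + 2 * real n3 * t3 + 2 * real n4 * t4 + 2 * real n5 * t5 \<le> T}"
    unfolding im1 by (rule card_image) (auto simp: inj_on_def)
  have i2: "card ?Fac = card {(n2, n4, n5). 2 * real n2 * t2 + 2 * real n4 * t4 + 2 * real n5 * t5 \<le> T}"
    unfolding im2 by (rule card_image) (auto simp: inj_on_def)
  have i3: "card ?Facde = card {n2. 2 * real n2 * t2 \<le> T}"
    unfolding im3 by (rule card_image) (auto simp: inj_on_def)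
  have j1: "card ?Fb = card {(n1, n3, n4, n5). 2 * real n1 * t1 + 2 * real n3 * t3 + 2 * real n4 * t4 + 2 * real n5 * t5 \<le> T}"
    unfolding imb1 by (rule card_image) (auto simp: inj_on_def)
  have j2: "card ?Fbc = card {(n1, n4, n5). 2 * real n1 * t1 + 2 * real n4 * t4 + 2 * real n5 * t5 \<le> T}"
    unfolding imb2 by (rule card_image) (auto simp: inj_on_def)
  have j3: "card ?Fbcde = card {n1. 2 * real n1 * t1 \<le> T}"
    unfolding imb3 by (rule card_image) (auto simp: inj_on_def)
  have k: "card {(a,b,c,d,e). val a b c d e \<le> T \<and> (c = 0 \<longrightarrow> d = 0 \<and> e = 0) \<and> c = 0} =
     card {(n1, n2). 2 * real n1 * t1 + 2 * real n2 * t2 \<le> T}"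
    unfolding imc by (rule card_image) (auto simp: inj_on_def)
  show ?thesis unfolding Nsplit of_nat_add ea eb ca cb i1 i2 i3 j1 j2 j3 k by simp
qed

end

theorem mainTheorem3:
  fixes t1 t2 t3 t4 t5 :: real
  assumes pos: "t1 > 0" "t2 > 0" "t3 > 0" "t4 > 0" "t5 > 0"
    and linindep: "\<And>q1 q2 q3 q4 q5 :: rat.
        of_rat q1 * t1 + of_rat q2 * t2 + of_rat q3 * t3 + of_rat q4 * t4 + of_rat q5 * t5 = 0 \<Longrightarrow>
        q1 = 0 \<and> q2 = 0 \<and> q3 = 0 \<and> q4 = 0 \<and> q5 = 0"
  shows "\<exists>C :: int. \<forall>T :: real. T \<ge> 0 \<longrightarrow>
    int (Nborn H_ends (H_time t1 t2 t3 t4 t5) A A T) =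
        int (card {(n1, n3, n4, n5).
               2 * real n1 * t1 + 2 * real n3 * t3 + 2 * real n4 * t4 + 2 * real n5 * t5 \<le> T})
      + int (card {(n2, n3, n4, n5).
               2 * real n2 * t2 + 2 * real n3 * t3 + 2 * real n4 * t4 + 2 * real n5 * t5 \<le> T})
      - int (card {(n1, n4, n5).
               2 * real n1 * t1 + 2 * real n4 * t4 + 2 * real n5 * t5 \<le> T})
      - int (card {(n2, n4, n5).
               2 * real n2 * t2 + 2 * real n4 * t4 + 2 * real n5 * t5 \<le> T})
      + int (card {(n1, n2). 2 * real n1 * t1 + 2 * real n2 * t2 \<le> T})
      + int (card {n1. 2 * real n1 * t1 \<le> T})
      + int (card {n2. 2 * real n2 * t2 \<le> T})
      + C"
proof -
  interpret H t1 t2 t3 t4 t5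
    using pos linindep by unfold_locales auto
  show ?thesis by (intro exI[of _ 0] allI impI) (simp add: final)
qed

end
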